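(* Let $\{\varphi_n\},\{\psi_n\}$ be biorthogonal sequences in a Hilbert space $\mathcal H$ and $\mathcal D,\mathcal E$ dense subspaces with $D_\psi\subseteq\mathcal D\subseteq D(\varphi)$, $D_\varphi\subseteq\mathcal E\subseteq D(\psi)$, such that $(\{\varphi_n\},\{\psi_n\})$ is a $(\mathcal D,\mathcal E)$-quasi basis. Then: (1) $D_\varphi^\perp\subseteq D(\varphi)$, where $D_\varphi^\perp$ is the orthogonal complement of $D_\varphi$; (2) if $\mathcal D\cap D_\varphi^\perp$ is dense in $D_\varphi^\perp$, then $D_\varphi$ is dense in $\mathcal H$. Similarly, $D_\psi^\perp\subseteq D(\psi)$, and if $\mathcal E\cap D_\psi^\perp$ is dense in $D_\psi^\perp$, then $D_\psi$ is dense in $\mathcal H$.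
   Context: Inner product linear in the first argument. Biorthogonal: $\langle\varphi_n,\psi_m\rangle=\delta_{nm}$. $D_\varphi,D_\psi$ are the linear spans of $\{\varphi_n\},\{\psi_n\}$; $D(\varphi)=\{x:\sum_n|\langle x,\varphi_n\rangle|^2<\infty\}$, similarly $D(\psi)$. The pair is a $(\mathcal D,\mathcal E)$-quasi basis if $\sum_k\langle x,\varphi_k\rangle\langle\psi_k,y\rangle=\langle x,y\rangle$ for all $x\in\mathcal D$, $y\in\mathcal E$. *)

theory Defs
  imports Complex_Main
begin

text \<open>A complex pre-Hilbert / Hilbert space is rendered as an additive group 'a with a
complex scalar multiplication sc (a module over complex, library locale module) and an
inner product ip, linear in the first argument.\<close>

definition complex_inner_product :: "(complex \<Rightarrow> 'a::ab_group_add \<Rightarrow> 'a) \<Rightarrow> ('a \<Rightarrow> 'a \<Rightarrow> complex) \<Rightarrow> bool" where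
  "complex_inner_product sc ip \<longleftrightarrow>
     (\<forall>x y z. ip (x + y) z = ip x z + ip y z) \<and>
     (\<forall>c x y. ip (sc c x) y = c * ip x y) \<and>
     (\<forall>x y. ip y x = cnj (ip x y)) \<and>
     (\<forall>x. Im (ip x x) = 0 \<and> Re (ip x x) \<ge> 0) \<and>
     (\<forall>x. ip x x = 0 \<longrightarrow> x = 0)"

definition ip_norm :: "('a \<Rightarrow> 'a \<Rightarrow> complex) \<Rightarrow> 'a \<Rightarrow> real" where
  "ip_norm ip x = sqrt (Re (ip x x))"

definition complex_hilbert_space :: "(complex \<Rightarrow> 'a::ab_group_add \<Rightarrow> 'a) \<Rightarrow> ('a \<Rightarrow> 'a \<Rightarrow> complex) \<Rightarrow> bool" where
  "complex_hilbert_space sc ip \<longleftrightarrow>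
     module sc \<and> complex_inner_product sc ip \<and>
     (\<forall>X::nat \<Rightarrow> 'a. (\<forall>e>0. \<exists>N. \<forall>m\<ge>N. \<forall>n\<ge>N. ip_norm ip (X m - X n) < e) \<longrightarrow>
        (\<exists>l. (\<lambda>n. ip_norm ip (X n - l)) \<longlonglongrightarrow> 0))"

definition dense_in :: "('a::ab_group_add \<Rightarrow> 'a \<Rightarrow> complex) \<Rightarrow> 'a set \<Rightarrow> 'a set \<Rightarrow> bool" where
  "dense_in ip A B \<longleftrightarrow> (\<forall>x\<in>B. \<forall>e>0. \<exists>y\<in>A. ip_norm ip (x - y) < e)"

definition orth_compl :: "('a \<Rightarrow> 'a \<Rightarrow> complex) \<Rightarrow> 'a set \<Rightarrow> 'a set" where
  "orth_compl ip S = {x. \<forall>y\<in>S. ip x y = 0}"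

definition Dseq :: "('a \<Rightarrow> 'a \<Rightarrow> complex) \<Rightarrow> (nat \<Rightarrow> 'a) \<Rightarrow> 'a set" where
  "Dseq ip phi = {x. summable (\<lambda>n. (cmod (ip x (phi n)))\<^sup>2)}"

definition biorthogonal :: "('a \<Rightarrow> 'a \<Rightarrow> complex) \<Rightarrow> (nat \<Rightarrow> 'a) \<Rightarrow> (nat \<Rightarrow> 'a) \<Rightarrow> bool" where
  "biorthogonal ip phi psi \<longleftrightarrow> (\<forall>n m. ip (phi n) (psi m) = (if n = m then 1 else 0))"

definition quasi_basis :: "('a \<Rightarrow> 'a \<Rightarrow> complex) \<Rightarrow> (nat \<Rightarrow> 'a) \<Rightarrow> (nat \<Rightarrow> 'a) \<Rightarrow> 'a set \<Rightarrow> 'a set \<Rightarrow> bool" where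
  "quasi_basis ip phi psi D E \<longleftrightarrow>
     (\<forall>x\<in>D. \<forall>y\<in>E. (\<lambda>k. ip x (phi k) * ip (psi k) y) sums ip x y)"

end

theory Submission imports Defs begin

locale cip = module sc for sc :: "complex \<Rightarrow> 'a::ab_group_add \<Rightarrow> 'a" +
  fixes ip :: "'a \<Rightarrow> 'a \<Rightarrow> complex"
  assumes cip: "complex_inner_product sc ip"
begin

abbreviation q where "q x \<equiv> Re (ip x x)"

lemma cip_all:
  "(\<forall>x y z. ip (x + y) z = ip x z + ip y z) \<and>
  (\<forall>c x y. ip (sc c x) y = c * ip x y) \<and>
  (\<forall>x y. ip y x = cnj (ip x y)) \<and>
  (\<forall>x. Im (ip x x) = 0 \<and> Re (ip x x) \<ge> 0) \<and>
  (\<forall>x. ip x x = 0 \<longrightarrow> x = 0)"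
  using cip unfolding complex_inner_product_def .

lemmas cip_parts = cip_all[THEN conjunct1] cip_all[THEN conjunct2, THEN conjunct1]
  cip_all[THEN conjunct2, THEN conjunct2, THEN conjunct1]
  cip_all[THEN conjunct2, THEN conjunct2, THEN conjunct2, THEN conjunct1]
  cip_all[THEN conjunct2, THEN conjunct2, THEN conjunct2, THEN conjunct2]

lemma ip_add_left: "ip (x + y) z = ip x z + ip y z"
  using cip_parts(1) by blast
lemma ip_scale_left: "ip (sc c x) y = c * ip x y"
  using cip_parts(2) by blast
lemma ip_cnj: "ip y x = cnj (ip x y)"
  using cip_parts(3) by blast
lemma q_nonneg: "q x \<ge> 0"
  using cip_parts(4) by blast
lemma ip_im: "Im (ip x x) = 0"
  using cip_parts(4) by blast
lemma ip_self: "ip x x = complex_of_real (q x)"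
  by (rule complex_eqI) (simp_all add: ip_im)
lemma ip_self_zero: "ip x x = 0 \<Longrightarrow> x = 0"
  using cip_parts(5) by blast
lemma q_zero_iff: "q x = 0 \<longleftrightarrow> x = 0"
proof
  assume "q x = 0"
  then have "ip x x = 0" by (subst ip_self) simp
  then show "x = 0" by (rule ip_self_zero)
next
  assume "x = 0"
  have "ip (0 + 0) 0 = ip 0 0 + ip 0 0" by (rule ip_add_left)
  then have "ip 0 0 = 0" by simp
  then show "q x = 0" using \<open>x = 0\<close> by simp
qed

lemma additive_left: "additive (\<lambda>x. ip x y)"
  by unfold_locales (rule ip_add_left)

lemma ip_zero_left[simp]: "ip 0 y = 0"
  using additive.zero[OF additive_left] .
lemma ip_minus_left: "ip (- x) y = - ip x y"
  using additive.minus[OF additive_left] .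
lemma ip_diff_left: "ip (x - z) y = ip x y - ip z y"
  using additive.diff[OF additive_left] .
lemma ip_zero_right[simp]: "ip y 0 = 0"
  by (metis ip_cnj ip_zero_left complex_cnj_zero)
lemma ip_add_right: "ip x (y + z) = ip x y + ip x z"
  by (subst (1 2 3) ip_cnj) (simp add: ip_add_left)
lemma ip_diff_right: "ip x (y - z) = ip x y - ip x z"
  by (subst (1 2 3) ip_cnj) (simp add: ip_diff_left)
lemma ip_minus_right: "ip x (- y) = - ip x y"
  by (subst (1 2) ip_cnj) (simp add: ip_minus_left)
lemma ip_scale_right: "ip x (sc c y) = cnj c * ip x y"
  by (subst (1 2) ip_cnj) (simp add: ip_scale_left)

lemma q_minus: "q (- x) = q x"
  by (simp add: ip_minus_left ip_minus_right)
lemma q_sym: "q (x - y) = q (y - x)"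
  by (metis minus_diff_eq q_minus)

lemma expand: "ip (x - sc c y) (x - sc c y) = ip x x - cnj c * ip x y - c * cnj (ip x y) + c * cnj c * ip y y"
proof -
  have "ip (x - sc c y) (x - sc c y) = ip x x - ip x (sc c y) - (ip (sc c y) x - ip (sc c y) (sc c y))"
    by (simp add: ip_diff_left ip_diff_right)
  also have "\<dots> = ip x x - cnj c * ip x y - (c * ip y x - cnj c * (c * ip y y))"
    by (simp only: ip_scale_left ip_scale_right)
  also have "ip y x = cnj (ip x y)" by (rule ip_cnj)
  finally show ?thesis by (simp add: algebra_simps)
qed

lemma expand_opt:
  assumes qy: "q y > 0"
  shows "q (x - sc (ip x y / complex_of_real (q y)) y) = q x - (cmod (ip x y))\<^sup>2 / q y"
proof -
  define c where "c = ip x y / complex_of_real (q y)"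
  have "q (x - sc c y) = q x - (cmod (ip x y))\<^sup>2 / q y"
  proof -
      have "ip (x - sc c y) (x - sc c y) = ip x x - cnj c * ip x y - c * cnj (ip x y) + c * cnj c * ip y y"
        by (rule expand)
      also have "\<dots> = complex_of_real (q x - (cmod (ip x y))\<^sup>2 / q y)"
      proof -
        define a where "a = ip x y"
        define r where "r = q y"
        have r: "r > 0" using qy r_def by simp
        have ac: "a * cnj a = complex_of_real ((cmod a)\<^sup>2)" by (rule complex_norm_square[symmetric, THEN trans]) (simp add: mult.commute complex_mult_cnj)
        have cc: "cnj c = cnj a / complex_of_real r" unfolding c_def a_def r_def by simp
        have c: "c = a / complex_of_real r" unfolding c_def a_def r_def by simp
        have "ip x x - cnj c * ip x y - c * cnj (ip x y) + c * cnj c * ip y y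
            = complex_of_real (q x) - cnj a * a / r - a * cnj a / r + a * cnj a * r / (r * r)"
        proof -
          have hy: "ip y y = complex_of_real r" unfolding r_def by (rule ip_self)
          show ?thesis unfolding cc c a_def[symmetric] hy by (simp add: ip_self[of x, symmetric])
        qed
        also have "\<dots> = complex_of_real (q x) - a * cnj a / r"
        proof -
          have R: "complex_of_real r \<noteq> 0" using r by simp
          have "a * cnj a * complex_of_real r / (complex_of_real r * complex_of_real r) = a * cnj a / complex_of_real r"
            using R by simp
          moreover have "cnj a * a = a * cnj a" by (rule mult.commute)
          ultimately show ?thesis by simp
        qed
        also have "\<dots> = complex_of_real (q x - (cmod a)\<^sup>2 / r)"
          unfolding ac by simp
        finally show ?thesis unfolding a_def r_def .
      qed
      finally show ?thesis by simp
  qed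
  then show ?thesis unfolding c_def .
qed

lemma CS_sq: "(cmod (ip x y))\<^sup>2 \<le> q x * q y"
proof (cases "y = 0")
  case True then show ?thesis by simp
next
  case False
  then have qy: "q y > 0" using q_nonneg[of y] q_zero_iff[of y] by linarith
  have "0 \<le> q (x - sc (ip x y / complex_of_real (q y)) y)" by (rule q_nonneg)
  also have "\<dots> = q x - (cmod (ip x y))\<^sup>2 / q y" by (rule expand_opt[OF qy])
  finally have "(cmod (ip x y))\<^sup>2 / q y \<le> q x" by linarith
  then show ?thesis using qy by (simp add: pos_divide_le_eq)
qed

lemma CS: "cmod (ip x y) \<le> sqrt (q x) * sqrt (q y)"
proof -
  have "cmod (ip x y) = sqrt ((cmod (ip x y))\<^sup>2)" by simp
  also have "\<dots> \<le> sqrt (q x * q y)" by (rule real_sqrt_le_mono[OF CS_sq])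
  also have "\<dots> = sqrt (q x) * sqrt (q y)" by (rule real_sqrt_mult)
  finally show ?thesis .
qed


lemma cmod_ip_self: "cmod (ip x x) = q x"
  by (subst ip_self) (simp add: q_nonneg)

lemma zero_of_orth_dense:
  assumes dA: "dense_in ip A UNIV" and orth: "\<forall>y\<in>A. ip x y = 0"
  shows "x = 0"
proof (rule ccontr)
  assume "x \<noteq> 0"
  then have qx: "q x > 0" using q_nonneg[of x] q_zero_iff[of x] by linarith
  define s where "s = sqrt (q x)"
  have s: "s > 0" using qx s_def by simp
  obtain y where y: "y \<in> A" "ip_norm ip (x - y) < s / 2"
    using dA s unfolding dense_in_def by (meson UNIV_I half_gt_zero)
  have "ip x x = ip x (x - y) + ip x y" by (simp add: ip_diff_right)
  also have "ip x y = 0" using orth y(1) by blast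
  finally have "ip x x = ip x (x - y)" by simp
  then have "q x = cmod (ip x (x - y))" using cmod_ip_self[of x] by simp
  also have "\<dots> \<le> s * sqrt (q (x - y))" unfolding s_def by (rule CS)
  also have "\<dots> \<le> s * (s / 2)"
    using y(2) s unfolding ip_norm_def by (intro mult_left_mono) auto
  finally have "q x \<le> s * (s / 2)" .
  moreover have "q x = s * s" unfolding s_def using q_nonneg[of x] by (simp add: real_sqrt_mult_self)
  ultimately show False using s by (simp add: field_simps)
qed

lemma q_add: "q (a + b) = q a + q b + 2 * Re (ip a b)"
proof -
  have "ip (a + b) (a + b) = ip a a + ip b b + (ip a b + ip b a)"
    by (simp add: ip_add_left ip_add_right algebra_simps)
  also have "ip b a = cnj (ip a b)" by (rule ip_cnj)
  finally show ?thesis by simp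
qed

lemma q_diff: "q (a - b) = q a + q b - 2 * Re (ip a b)"
proof -
  have "ip (a - b) (a - b) = ip a a + ip b b - (ip a b + ip b a)"
    by (simp add: ip_diff_left ip_diff_right algebra_simps)
  also have "ip b a = cnj (ip a b)" by (rule ip_cnj)
  finally show ?thesis by simp
qed

lemma q_scale: "q (sc c w) = (cmod c)\<^sup>2 * q w"
proof -
  have "ip (sc c w) (sc c w) = c * cnj c * ip w w"
    by (simp add: ip_scale_left ip_scale_right)
  also have "c * cnj c = complex_of_real ((cmod c)\<^sup>2)"
    by (rule complex_norm_square[symmetric])
  finally have "ip (sc c w) (sc c w) = complex_of_real ((cmod c)\<^sup>2) * ip w w" .
  then show ?thesis by simp
qed

lemma q_cont:
  assumes "(\<lambda>n. q (u n - u0)) \<longlonglongrightarrow> 0"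
  shows "(\<lambda>n. q (u n)) \<longlonglongrightarrow> q u0"
proof -
  have eq: "q (u n) = q u0 + q (u n - u0) + 2 * Re (ip (u n - u0) u0)" for n
  proof -
    have h: "q ((u n - u0) + u0) = q (u n - u0) + q u0 + 2 * Re (ip (u n - u0) u0)" by (rule q_add)
    have "(u n - u0) + u0 = u n" by simp
    then show ?thesis using h by simp
  qed
  have b: "\<bar>Re (ip (u n - u0) u0)\<bar> \<le> sqrt (q (u n - u0)) * sqrt (q u0)" for n
    using abs_Re_le_cmod[of "ip (u n - u0) u0"] CS[of "u n - u0" u0] by linarith
  have s0: "(\<lambda>n. sqrt (q (u n - u0)) * sqrt (q u0)) \<longlonglongrightarrow> 0"
    using tendsto_mult[OF tendsto_real_sqrt[OF assms] tendsto_const[of "sqrt (q u0)"]] by simp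
  have r0: "(\<lambda>n. Re (ip (u n - u0) u0)) \<longlonglongrightarrow> 0"
  proof (rule tendsto_sandwich[of "\<lambda>n. - (sqrt (q (u n - u0)) * sqrt (q u0))" _ _ "\<lambda>n. sqrt (q (u n - u0)) * sqrt (q u0)"])
    show "\<forall>\<^sub>F n in sequentially. - (sqrt (q (u n - u0)) * sqrt (q u0)) \<le> Re (ip (u n - u0) u0)"
    proof (intro always_eventually allI)
      fix n show "- (sqrt (q (u n - u0)) * sqrt (q u0)) \<le> Re (ip (u n - u0) u0)"
        using b[of n] by (simp add: abs_le_iff)
    qed
    show "\<forall>\<^sub>F n in sequentially. Re (ip (u n - u0) u0) \<le> sqrt (q (u n - u0)) * sqrt (q u0)"
    proof (intro always_eventually allI)
      fix n show "Re (ip (u n - u0) u0) \<le> sqrt (q (u n - u0)) * sqrt (q u0)"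
        using b[of n] by (simp add: abs_le_iff)
    qed
    show "(\<lambda>n. - (sqrt (q (u n - u0)) * sqrt (q u0))) \<longlonglongrightarrow> 0"
      using tendsto_minus[OF s0] by simp
    show "(\<lambda>n. sqrt (q (u n - u0)) * sqrt (q u0)) \<longlonglongrightarrow> 0" by (rule s0)
  qed
  have "(\<lambda>n. q u0 + q (u n - u0) + 2 * Re (ip (u n - u0) u0)) \<longlonglongrightarrow> q u0 + 0 + 2 * 0"
    by (intro tendsto_intros assms r0)
  then show ?thesis unfolding eq by simp
qed


lemma orth_of_min:
  assumes min: "\<And>t. q w \<le> q (w - sc t v)"
  shows "ip w v = 0"
proof (cases "v = 0")
  case True then show ?thesis by simp
next
  case False
  then have qv: "q v > 0" using q_nonneg[of v] q_zero_iff[of v] by linarith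
  have "q w \<le> q w - (cmod (ip w v))\<^sup>2 / q v"
    using min[of "ip w v / complex_of_real (q v)"] expand_opt[OF qv, of w] by simp
  then have "(cmod (ip w v))\<^sup>2 / q v \<le> 0" by linarith
  then have "(cmod (ip w v))\<^sup>2 \<le> 0" using qv by (simp add: divide_le_0_iff)
  then show ?thesis by simp
qed

lemma sc_two_mid: "sc 2 (z - sc (1/2) (a + b)) = (z - a) + (z - b)"
proof -
  have "sc 2 (z - sc (1/2) (a + b)) = sc 2 z - sc (2 * (1/2)) (a + b)"
    by (simp add: scale_right_diff_distrib)
  also have "sc (2 * (1/2)) (a + b) = a + b" by simp
  also have "sc 2 z = z + z" using scale_left_distrib[of 1 1 z] by simp
  finally show ?thesis by (simp add: algebra_simps)
qed

lemma projection_dense: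
  assumes compl: "\<forall>X::nat \<Rightarrow> 'a. (\<forall>e>0. \<exists>N. \<forall>m\<ge>N. \<forall>n\<ge>N. ip_norm ip (X m - X n) < e) \<longrightarrow>
        (\<exists>l. (\<lambda>n. ip_norm ip (X n - l)) \<longlonglongrightarrow> 0)"
    and S: "subspace S"
    and orth: "orth_compl ip S \<subseteq> {0}"
  shows "dense_in ip S UNIV"
  unfolding dense_in_def
proof (intro ballI allI impI)
  fix z :: 'a and e :: real
  assume e: "e > 0"
  define Q where "Q = (\<lambda>y. q (z - y)) ` S"
  define d where "d = Inf Q"
  have Qne: "Q \<noteq> {}" unfolding Q_def using subspace_0[OF S] by blast
  have Qbdd: "bdd_below Q" unfolding Q_def by (rule bdd_belowI[of _ 0]) (auto simp: q_nonneg)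
  have dle: "d \<le> q (z - y)" if "y \<in> S" for y
    unfolding d_def Q_def by (rule cInf_lower) (use that Qbdd Q_def in auto)
  have "\<exists>y\<in>S. q (z - y) < d + 1 / (real n + 1)" for n
  proof -
    have "Inf Q < d + 1 / (real n + 1)" unfolding d_def by simp
    then obtain t where "t \<in> Q" "t < d + 1 / (real n + 1)" using cInf_lessD[OF Qne] by blast
    then show ?thesis unfolding Q_def by blast
  qed
  then obtain Y where Y: "\<And>n. Y n \<in> S" "\<And>n. q (z - Y n) < d + 1 / (real n + 1)"
    by metis
  have par: "q (Y m - Y n) \<le> 2 / (real m + 1) + 2 / (real n + 1)" for m n
  proof -
    have mid: "sc (1/2) (Y m + Y n) \<in> S" using S Y(1) by (simp add: subspace_add subspace_scale)
    have "q ((z - Y m) + (z - Y n)) = q (sc 2 (z - sc (1/2) (Y m + Y n)))"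
      by (simp only: sc_two_mid)
    also have "\<dots> = 4 * q (z - sc (1/2) (Y m + Y n))" by (simp add: q_scale)
    finally have h1: "q ((z - Y m) + (z - Y n)) \<ge> 4 * d" using dle[OF mid] by simp
    have h2: "q ((z - Y m) - (z - Y n)) + q ((z - Y m) + (z - Y n)) = 2 * q (z - Y m) + 2 * q (z - Y n)"
      using q_add[of "z - Y m" "z - Y n"] q_diff[of "z - Y m" "z - Y n"] by simp
    have h3: "(z - Y m) - (z - Y n) = Y n - Y m" by (simp add: algebra_simps)
    have "q (Y m - Y n) = q (Y n - Y m)" by (rule q_sym)
    moreover have "q (Y n - Y m) < 2 * (1 / (real m + 1)) + 2 * (1 / (real n + 1))"
      using h1 h2[unfolded h3] Y(2)[of m] Y(2)[of n] by linarith
    ultimately show ?thesis by simp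
  qed
  have cauchy: "\<forall>e>0. \<exists>N. \<forall>m\<ge>N. \<forall>n\<ge>N. ip_norm ip (Y m - Y n) < e"
  proof (intro allI impI)
    fix e :: real assume e: "e > 0"
    obtain N :: nat where N: "4 / e\<^sup>2 < real N" using reals_Archimedean2 by blast
    have Npos: "4 / (real N + 1) < e\<^sup>2"
    proof -
      have e2: "e\<^sup>2 > 0" using e by simp
      have "4 < real N * e\<^sup>2" using N e2 by (simp add: field_simps)
      moreover have "(real N + 1) * e\<^sup>2 = real N * e\<^sup>2 + e\<^sup>2" by (simp add: distrib_right)
      ultimately have "4 < (real N + 1) * e\<^sup>2" using e2 by linarith
      then show ?thesis by (simp add: field_simps)
    qed
    show "\<exists>N. \<forall>m\<ge>N. \<forall>n\<ge>N. ip_norm ip (Y m - Y n) < e"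
    proof (intro exI allI impI)
      fix m n assume mn: "N \<le> m" "N \<le> n"
      have "2 / (real m + 1) \<le> 2 / (real N + 1)" "2 / (real n + 1) \<le> 2 / (real N + 1)"
        using mn by (simp_all add: frac_le)
      then have "q (Y m - Y n) < e\<^sup>2" using par[of m n] Npos by simp
      then have "sqrt (q (Y m - Y n)) < sqrt (e\<^sup>2)" by (rule real_sqrt_less_mono)
      then show "ip_norm ip (Y m - Y n) < e" unfolding ip_norm_def using e by simp
    qed
  qed
  then obtain l where l: "(\<lambda>n. ip_norm ip (Y n - l)) \<longlonglongrightarrow> 0" using compl by blast
  have ql: "(\<lambda>n. q (Y n - l)) \<longlonglongrightarrow> 0"
  proof -
    have "(\<lambda>n. (ip_norm ip (Y n - l))\<^sup>2) \<longlonglongrightarrow> 0\<^sup>2" by (intro tendsto_intros l)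
    moreover have "(ip_norm ip (Y n - l))\<^sup>2 = q (Y n - l)" for n
      unfolding ip_norm_def using q_nonneg by simp
    ultimately show ?thesis by simp
  qed
  have ql': "(\<lambda>n. q (l - Y n)) \<longlonglongrightarrow> 0" using ql by (subst q_sym) simp
  have lim1: "(\<lambda>n. q (z - Y n)) \<longlonglongrightarrow> q (z - l)"
    by (rule q_cont) (simp add: ql')
  have lim2: "(\<lambda>n. q (z - Y n)) \<longlonglongrightarrow> d"
  proof (rule tendsto_sandwich[of "\<lambda>n. d" _ _ "\<lambda>n. d + 1 / (real n + 1)"])
    show "\<forall>\<^sub>F n in sequentially. d \<le> q (z - Y n)" using dle Y(1) by simp
    show "\<forall>\<^sub>F n in sequentially. q (z - Y n) \<le> d + 1 / (real n + 1)"
      using Y(2) by (simp add: less_imp_le)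
    show "(\<lambda>n. d) \<longlonglongrightarrow> d" by simp
    have "(\<lambda>n. 1 / (real n + 1)) \<longlonglongrightarrow> 0" using LIMSEQ_inverse_real_of_nat by (simp add: divide_inverse add.commute)
    then show "(\<lambda>n. d + 1 / (real n + 1)) \<longlonglongrightarrow> d" using tendsto_add[of "\<lambda>n. d" d sequentially] by fastforce
  qed
  have qw: "q (z - l) = d" using LIMSEQ_unique[OF lim1 lim2] .
  have wmin: "q (z - l) \<le> q ((z - l) - sc t v)" if v: "v \<in> S" for t v
  proof -
    have "(\<lambda>n. q ((z - Y n) - sc t v)) \<longlonglongrightarrow> q ((z - l) - sc t v)"
    proof (rule q_cont)
      have "(z - Y n - sc t v) - (z - l - sc t v) = l - Y n" for n by (simp add: algebra_simps)
      then show "(\<lambda>n. q (z - Y n - sc t v - (z - l - sc t v))) \<longlonglongrightarrow> 0" using ql' by simp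
    qed
    moreover have "d \<le> q ((z - Y n) - sc t v)" for n
    proof -
      have inS: "Y n + sc t v \<in> S" using S Y(1) v by (simp add: subspace_add subspace_scale)
      have eq: "z - Y n - sc t v = z - (Y n + sc t v)" by (simp add: algebra_simps)
      show ?thesis unfolding eq by (rule dle[OF inS])
    qed
    ultimately have "d \<le> q ((z - l) - sc t v)" by (intro LIMSEQ_le_const) auto
    then show ?thesis using qw by simp
  qed
  have "z - l \<in> orth_compl ip S"
    unfolding orth_compl_def using orth_of_min wmin by blast
  then have "z - l = 0" using orth by blast
  then have zl: "z = l" by simp
  have "(\<lambda>n. sqrt (q (Y n - l))) \<longlonglongrightarrow> sqrt 0" by (intro tendsto_intros ql)
  then have "\<forall>\<^sub>F n in sequentially. sqrt (q (Y n - l)) < e"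
    using e by (simp add: order_tendstoD(2))
  then obtain n where "sqrt (q (Y n - l)) < e" using eventually_sequentially by auto
  then have "ip_norm ip (z - Y n) < e" unfolding ip_norm_def zl by (simp add: q_sym)
  then show "\<exists>y\<in>S. ip_norm ip (z - y) < e" using Y(1) by blast
qed


lemma orth_zero_from_dense:
  assumes "dense_in ip (A \<inter> B) B" and "\<forall>x\<in>A \<inter> B. x = 0"
  shows "B \<subseteq> {0}"
proof
  fix z assume z: "z \<in> B"
  have "z = 0"
  proof (rule ccontr)
    assume "z \<noteq> 0"
    then have "q z > 0" using q_nonneg[of z] q_zero_iff[of z] by linarith
    then have e: "sqrt (q z) > 0" by simp
    then obtain y where y: "y \<in> A \<inter> B" "ip_norm ip (z - y) < sqrt (q z)"
      using assms(1) z unfolding dense_in_def by blast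
    have "y = 0" using assms(2) y(1) by blast
    then show False using y(2) unfolding ip_norm_def by simp
  qed
  then show "z \<in> {0}" by simp
qed

end

theorem proposition4p1:
  fixes sc :: "complex \<Rightarrow> 'a::ab_group_add \<Rightarrow> 'a"
    and ip :: "'a \<Rightarrow> 'a \<Rightarrow> complex"
    and phi psi :: "nat \<Rightarrow> 'a"
    and D E :: "'a set"
  assumes H: "complex_hilbert_space sc ip"
    and bio: "biorthogonal ip phi psi"
    and subD: "module.subspace sc D" and subE: "module.subspace sc E"
    and denseD: "dense_in ip D UNIV" and denseE: "dense_in ip E UNIV"
    and D1: "module.span sc (range psi) \<subseteq> D" and D2: "D \<subseteq> Dseq ip phi"
    and E1: "module.span sc (range phi) \<subseteq> E" and E2: "E \<subseteq> Dseq ip psi"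
    and qb: "quasi_basis ip phi psi D E"
  shows "orth_compl ip (module.span sc (range phi)) \<subseteq> Dseq ip phi
    \<and> (dense_in ip (D \<inter> orth_compl ip (module.span sc (range phi)))
                    (orth_compl ip (module.span sc (range phi)))
         \<longrightarrow> dense_in ip (module.span sc (range phi)) UNIV)
    \<and> orth_compl ip (module.span sc (range psi)) \<subseteq> Dseq ip psi
    \<and> (dense_in ip (E \<inter> orth_compl ip (module.span sc (range psi)))
                    (orth_compl ip (module.span sc (range psi)))
         \<longrightarrow> dense_in ip (module.span sc (range psi)) UNIV)"
proof -
  have mod: "module sc" and cipH: "complex_inner_product sc ip"
    and compl: "\<forall>X::nat \<Rightarrow> 'a. (\<forall>e>0. \<exists>N. \<forall>m\<ge>N. \<forall>n\<ge>N. ip_norm ip (X m - X n) < e) \<longrightarrow>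
        (\<exists>l. (\<lambda>n. ip_norm ip (X n - l)) \<longlonglongrightarrow> 0)"
    using H unfolding complex_hilbert_space_def by blast+
  interpret c: cip sc ip
    using mod cipH by (simp add: cip_def cip_axioms_def)
  define Sp where "Sp = module.span sc (range phi)"
  define Ss where "Ss = module.span sc (range psi)"
  define Op where "Op = orth_compl ip Sp"
  define Os where "Os = orth_compl ip Ss"
  have p1: "Op \<subseteq> Dseq ip phi"
  proof
    fix x assume x: "x \<in> Op"
    have "ip x (phi n) = 0" for n
      using x c.span_base[of "phi n" "range phi"] unfolding Op_def orth_compl_def Sp_def by blast
    then show "x \<in> Dseq ip phi" unfolding Dseq_def by simp
  qed
  have p3: "Os \<subseteq> Dseq ip psi"
  proof
    fix x assume x: "x \<in> Os"
    have "ip x (psi n) = 0" for n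
      using x c.span_base[of "psi n" "range psi"] unfolding Os_def orth_compl_def Ss_def by blast
    then show "x \<in> Dseq ip psi" unfolding Dseq_def by simp
  qed
  have p2: "dense_in ip (D \<inter> Op) Op \<longrightarrow> dense_in ip Sp UNIV"
  proof
    assume dn: "dense_in ip (D \<inter> Op) Op"
    have "\<forall>x\<in>D \<inter> Op. x = 0"
    proof
      fix x assume x: "x \<in> D \<inter> Op"
      have "ip x (phi k) = 0" for k
        using x c.span_base[of "phi k" "range phi"] unfolding Op_def orth_compl_def Sp_def by blast
      have "\<forall>y\<in>E. ip x y = 0"
      proof
        fix y assume y: "y \<in> E"
        have "(\<lambda>k. ip x (phi k) * ip (psi k) y) sums ip x y" using qb x y unfolding quasi_basis_def by blast
        moreover have "(\<lambda>k. ip x (phi k) * ip (psi k) y) = (\<lambda>k. 0)"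
          using \<open>\<And>k. ip x (phi k) = 0\<close> by simp
        ultimately show "ip x y = 0" using sums_unique2 sums_zero by metis
      qed
      then show "x = 0" by (rule c.zero_of_orth_dense[OF denseE])
    qed
    then have "Op \<subseteq> {0}" by (rule c.orth_zero_from_dense[OF dn])
    then show "dense_in ip Sp UNIV" unfolding Op_def Sp_def
      by (intro c.projection_dense[OF compl]) simp_all
  qed
  have p4: "dense_in ip (E \<inter> Os) Os \<longrightarrow> dense_in ip Ss UNIV"
  proof
    assume dn: "dense_in ip (E \<inter> Os) Os"
    have "\<forall>x\<in>E \<inter> Os. x = 0"
    proof
      fix x assume x: "x \<in> E \<inter> Os"
      have "ip x (psi k) = 0" for k
        using x c.span_base[of "psi k" "range psi"] unfolding Os_def orth_compl_def Ss_def by blast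
      then have z: "ip (psi k) x = 0" for k by (subst c.ip_cnj) simp
      have "\<forall>y\<in>D. ip x y = 0"
      proof
        fix y assume y: "y \<in> D"
        have "(\<lambda>k. ip y (phi k) * ip (psi k) x) sums ip y x" using qb x y unfolding quasi_basis_def by blast
        moreover have "(\<lambda>k. ip y (phi k) * ip (psi k) x) = (\<lambda>k. 0)"
          using z by simp
        ultimately have "ip y x = 0" using sums_unique2 sums_zero by metis
        then show "ip x y = 0" by (subst c.ip_cnj) simp
      qed
      then show "x = 0" by (rule c.zero_of_orth_dense[OF denseD])
    qed
    then have "Os \<subseteq> {0}" by (rule c.orth_zero_from_dense[OF dn])
    then show "dense_in ip Ss UNIV" unfolding Os_def Ss_def
      by (intro c.projection_dense[OF compl]) simp_all
  qed
  show ?thesis using p1 p2 p3 p4 unfolding Op_def Os_def Sp_def Ss_def by blast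
qed

end
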